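(* Let $\mathcal{T}$ be a separable multi-transducer with a single initial state. Then $[\![\mathcal{T}]\!]$ is multi-sequential.
   Context: A multi-transducer is a tuple $\mathcal{T}=(Q,E,I,F,f)$ with finite state set $Q$, initial states $I$, final states $F$, transitions $E\subseteq Q\times\Sigma\times\Gamma^*\times Q$, and a final output function $f$ mapping each final state to a finite set of words of $\Gamma^*$; it realises $[\![\mathcal{T}]\!]=\{(u,wx) : i\xrightarrow{u\mid w}t,\ i\in I,\ t\in F,\ x\in f(t)\}$, where $i\xrightarrow{u\mid w}t$ means a run from $i$ to $t$ reading $u$ and outputting $w$. A transition is transient if its source and target lie in distinct strongly connected components (equivalently there is no run from its target to its source). $\mathcal{T}$ is separable if it has a single initial state and any two distinct transitions with the same source and the same input letter are transient. A transducer (final output function into $\Gamma^*$) is sequential if it has a single initial state and at most one transition per (state, input letter); a sequential function is one realised by a sequential transducer; a relation is multi-sequential if it is a finite union of sequential functions. *)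

theory Defs
  imports Main
begin

inductive run :: "('q \<times> 'a \<times> 'b list \<times> 'q) set \<Rightarrow> 'q \<Rightarrow> 'a list \<Rightarrow> 'b list \<Rightarrow> 'q \<Rightarrow> bool"
  for E where
  run_nil: "run E p [] [] p"
| run_cons: "(p, a, v, p') \<in> E \<Longrightarrow> run E p' u w q \<Longrightarrow> run E p (a # u) (v @ w) q"

record ('q, 'a, 'b) mtrans =
  mt_states :: "'q set"
  mt_trans  :: "('q \<times> 'a \<times> 'b list \<times> 'q) set"
  mt_init   :: "'q set"
  mt_final  :: "'q set"
  mt_fout   :: "'q \<Rightarrow> 'b list set"

definition wf_mtrans :: "('q, 'a, 'b) mtrans \<Rightarrow> bool" where
  "wf_mtrans T \<longleftrightarrow>
     finite (mt_states T) \<and> finite (mt_trans T) \<and>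
     (\<forall>(p, a, v, q) \<in> mt_trans T. p \<in> mt_states T \<and> q \<in> mt_states T) \<and>
     mt_init T \<subseteq> mt_states T \<and> mt_final T \<subseteq> mt_states T \<and>
     (\<forall>t \<in> mt_final T. finite (mt_fout T t))"

definition mt_sem :: "('q, 'a, 'b) mtrans \<Rightarrow> ('a list \<times> 'b list) set" where
  "mt_sem T = {(u, w @ x) | u w x i t.
      i \<in> mt_init T \<and> t \<in> mt_final T \<and> run (mt_trans T) i u w t \<and> x \<in> mt_fout T t}"

definition transient :: "('q \<times> 'a \<times> 'b list \<times> 'q) set \<Rightarrow> ('q \<times> 'a \<times> 'b list \<times> 'q) \<Rightarrow> bool" where
  "transient E e \<longleftrightarrow> (case e of (p, a, v, q) \<Rightarrow> \<not> (\<exists>u w. run E q u w p))"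

definition separable :: "('q, 'a, 'b) mtrans \<Rightarrow> bool" where
  "separable T \<longleftrightarrow>
     (\<exists>i. mt_init T = {i}) \<and>
     (\<forall>e1 \<in> mt_trans T. \<forall>e2 \<in> mt_trans T.
        e1 \<noteq> e2 \<and> fst e1 = fst e2 \<and> fst (snd e1) = fst (snd e2) \<longrightarrow>
        transient (mt_trans T) e1 \<and> transient (mt_trans T) e2)"

record ('q, 'a, 'b) strans =
  st_states :: "'q set"
  st_trans  :: "('q \<times> 'a \<times> 'b list \<times> 'q) set"
  st_init   :: "'q"
  st_final  :: "'q set"
  st_fout   :: "'q \<Rightarrow> 'b list"

definition sequential_trans :: "('q, 'a, 'b) strans \<Rightarrow> bool" where
  "sequential_trans S \<longleftrightarrow>
     finite (st_states S) \<and> finite (st_trans S) \<and>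
     (\<forall>(p, a, v, q) \<in> st_trans S. p \<in> st_states S \<and> q \<in> st_states S) \<and>
     st_init S \<in> st_states S \<and> st_final S \<subseteq> st_states S \<and>
     (\<forall>p a v q v' q'. (p, a, v, q) \<in> st_trans S \<and> (p, a, v', q') \<in> st_trans S
        \<longrightarrow> v = v' \<and> q = q')"

definition st_sem :: "('q, 'a, 'b) strans \<Rightarrow> ('a list \<times> 'b list) set" where
  "st_sem S = {(u, w @ st_fout S t) | u w t.
      t \<in> st_final S \<and> run (st_trans S) (st_init S) u w t}"

text \<open>Sequential function: realised by some sequential transducer (state sets taken,
  without loss of generality, to be finite sets of natural numbers).\<close>
definition sequential_function :: "('a list \<times> 'b list) set \<Rightarrow> bool" where
  "sequential_function R \<longleftrightarrow>
     (\<exists>S :: (nat, 'a, 'b) strans. sequential_trans S \<and> R = st_sem S)"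

definition multi_sequential :: "('a list \<times> 'b list) set \<Rightarrow> bool" where
  "multi_sequential R \<longleftrightarrow>
     (\<exists>Rs. finite Rs \<and> (\<forall>R' \<in> Rs. sequential_function R') \<and> R = \<Union> Rs)"

end

theory Submission
  imports Defs
begin

inductive trun :: "('q \<times> 'a \<times> 'b list \<times> 'q) set \<Rightarrow> 'q \<Rightarrow> 'a list \<Rightarrow> 'b list
   \<Rightarrow> ('q \<times> 'a \<times> 'b list \<times> 'q) list \<Rightarrow> 'q \<Rightarrow> bool" for E where
  trun_nil: "trun E p [] [] [] p"
| trun_nt: "(p, a, v, p') \<in> E \<Longrightarrow> \<not> transient E (p, a, v, p') \<Longrightarrow> trun E p' u w s q
     \<Longrightarrow> trun E p (a # u) (v @ w) s q"
| trun_tr: "(p, a, v, p') \<in> E \<Longrightarrow> transient E (p, a, v, p') \<Longrightarrow> trun E p' u w s q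
     \<Longrightarrow> trun E p (a # u) (v @ w) ((p, a, v, p') # s) q"

lemma run_trun: "run E p u w q \<Longrightarrow> \<exists>s. trun E p u w s q"
proof (induction rule: run.induct)
  case (run_nil p) then show ?case by (blast intro: trun_nil)
next
  case (run_cons p a v p' u w q)
  then obtain s where "trun E p' u w s q" by blast
  then show ?case using run_cons.hyps
    by (cases "transient E (p, a, v, p')") (blast intro: trun_nt trun_tr)+
qed

lemma trun_run: "trun E p u w s q \<Longrightarrow> run E p u w q"
  by (induction rule: trun.induct) (auto intro: run.intros)

lemma trun_reach: "trun E p u w s q \<Longrightarrow> e \<in> set s \<Longrightarrow> \<exists>u w. run E p u w (fst e)"
proof (induction rule: trun.induct)
  case (trun_nil p) then show ?case by simp
next
  case (trun_nt p a v p' u w s q)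
  then obtain u' w' where "run E p' u' w' (fst e)" by blast
  then show ?case using trun_nt.hyps(1) by (blast intro: run_cons)
next
  case (trun_tr p a v p' u w s q)
  show ?case
  proof (cases "e = (p, a, v, p')")
    case True then show ?thesis by (auto intro: run_nil)
  next
    case False
    then have "e \<in> set s" using trun_tr.prems by simp
    then obtain u' w' where "run E p' u' w' (fst e)" using trun_tr.IH by blast
    then show ?thesis using trun_tr.hyps(1) by (blast intro: run_cons)
  qed
qed

lemma trun_distinct: "trun E p u w s q \<Longrightarrow> distinct s \<and> set s \<subseteq> {e \<in> E. transient E e}"
proof (induction rule: trun.induct)
  case (trun_tr p a v p' u w s q)
  have "(p, a, v, p') \<notin> set s"
  proof
    assume "(p, a, v, p') \<in> set s"
    from trun_reach[OF trun_tr.hyps(3) this] obtain u' w' where "run E p' u' w' p" by auto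
    then show False using trun_tr.hyps(2) unfolding transient_def by auto
  qed
  then show ?case using trun_tr by auto
qed auto

lemma run_map: "run E p u w q \<Longrightarrow>
   run ((\<lambda>(p, a, v, q). (f p, a, v, f q)) ` E) (f p) u w (f q)"
proof (induction rule: run.induct)
  case (run_nil p) then show ?case by (rule run.run_nil)
next
  case (run_cons p a v p' u w q)
  have "(f p, a, v, f p') \<in> (\<lambda>(p, a, v, q). (f p, a, v, f q)) ` E"
    using run_cons.hyps(1) by force
  then show ?case using run_cons.IH by (rule run.run_cons)
qed

lemma run_unmap: "run E' p' u w q' \<Longrightarrow> E' = (\<lambda>(p, a, v, q). (f p, a, v, f q)) ` E \<Longrightarrow>
   inj_on f S \<Longrightarrow> (\<forall>(p, a, v, q) \<in> E. p \<in> S \<and> q \<in> S) \<Longrightarrow>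
   p \<in> S \<Longrightarrow> p' = f p \<Longrightarrow> \<exists>q \<in> S. q' = f q \<and> run E p u w q"
proof (induction arbitrary: p rule: run.induct)
  case (run_nil p0) then show ?case by (auto intro: run.run_nil)
next
  case (run_cons p0 a v p1 u w q)
  from run_cons.prems(1) run_cons.hyps(1) obtain x y where
    xy: "(x, a, v, y) \<in> E" "p0 = f x" "p1 = f y" by auto
  have xS: "x \<in> S" "y \<in> S" using xy(1) run_cons.prems(3) by auto
  have "x = p" using run_cons.prems(2,4,5) xy(2) xS inj_on_eq_iff by metis
  from run_cons.IH[OF run_cons.prems(1-3) xS(2) xy(3)] obtain q0 where
    "q0 \<in> S" "q = f q0" "run E y u w q0" by blast
  then show ?case using xy(1) \<open>x = p\<close> by (blast intro: run.run_cons)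
qed

lemma seq_nat:
  fixes S :: "('s, 'a, 'b) strans"
  assumes "sequential_trans S"
  shows "sequential_function (st_sem S)"
proof -
  let ?Q = "st_states S"
  have fin: "finite ?Q" using assms unfolding sequential_trans_def by auto
  obtain f :: "'s \<Rightarrow> nat" and n where f: "f ` ?Q = {i. i < n}" "inj_on f ?Q"
    using finite_imp_inj_to_nat_seg[OF fin] by blast
  define g where "g = (\<lambda>(p, a::'a, v::'b list, q). (f p, a, v, f q))"
  define S' :: "(nat, 'a, 'b) strans" where "S' = \<lparr>st_states = f ` ?Q,
     st_trans = g ` st_trans S, st_init = f (st_init S), st_final = f ` st_final S,
     st_fout = (\<lambda>k. st_fout S (inv_into ?Q f k))\<rparr>"
  have inS: "\<forall>(p, a, v, q) \<in> st_trans S. p \<in> ?Q \<and> q \<in> ?Q"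
    using assms unfolding sequential_trans_def by auto
  have det: "\<And>p a v q v' q'. (p, a, v, q) \<in> st_trans S \<Longrightarrow> (p, a, v', q') \<in> st_trans S
        \<Longrightarrow> v = v' \<and> q = q'"
    using assms unfolding sequential_trans_def by blast
  have c1: "finite (f ` ?Q)" using fin by simp
  have c2: "finite (g ` st_trans S)" using assms unfolding sequential_trans_def by auto
  have c3: "\<forall>x\<in>g ` st_trans S. case x of (p, a, v, q) \<Rightarrow> p \<in> f ` ?Q \<and> q \<in> f ` ?Q"
    using inS unfolding g_def by auto
  have c4: "st_init S \<in> ?Q" using assms unfolding sequential_trans_def by auto
  have c5: "f ` st_final S \<subseteq> f ` ?Q" using assms unfolding sequential_trans_def by auto
  have c6: "v = v' \<and> q = q'"
    if h: "(p, a, v, q) \<in> g ` st_trans S" "(p, a, v', q') \<in> g ` st_trans S" for p a v q v' q'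
  proof -
    obtain x y x' y' where xy: "(x, a, v, y) \<in> st_trans S" "p = f x" "q = f y"
      "(x', a, v', y') \<in> st_trans S" "p = f x'" "q' = f y'"
      using h unfolding g_def by auto
    have "x \<in> ?Q" "x' \<in> ?Q" using xy(1,4) inS by auto
    then have "x = x'" using xy(2,5) f(2) inj_on_eq_iff by metis
    then show ?thesis using det xy by blast
  qed
  have "sequential_trans S'"
    unfolding sequential_trans_def S'_def
    apply (simp only: strans.simps)
    apply (intro conjI c1 c2 c3 c5 imageI c4 allI impI)
    using c6 apply blast+
    done
  moreover have "st_sem S' = st_sem S"
  proof (rule set_eqI, rule iffI)
    fix z assume "z \<in> st_sem S'"
    then obtain u w t where z: "z = (u, w @ st_fout S' t)" "t \<in> st_final S'"
      "run (st_trans S') (st_init S') u w t" unfolding st_sem_def by blast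
    have i: "st_init S \<in> ?Q" using assms unfolding sequential_trans_def by auto
    have r: "run (g ` st_trans S) (f (st_init S)) u w t" using z(3) unfolding S'_def by simp
    have ge: "g ` st_trans S = (\<lambda>(p, a, v, q). (f p, a, v, f q)) ` st_trans S"
      by (simp add: g_def)
    from run_unmap[OF r ge f(2) inS i refl]
    obtain q where q: "q \<in> ?Q" "t = f q" "run (st_trans S) (st_init S) u w q"
      by auto
    from z(2) obtain t0 where t0: "t0 \<in> st_final S" "t = f t0" unfolding S'_def by auto
    have "t0 \<in> ?Q" using t0 assms unfolding sequential_trans_def by auto
    then have "t0 = q" using q t0 f(2) inj_on_eq_iff by metis
    have "st_fout S' t = st_fout S q" unfolding S'_def using q f(2) by simp
    then show "z \<in> st_sem S" unfolding st_sem_def using z(1) q t0 \<open>t0 = q\<close> by auto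
  next
    fix z assume "z \<in> st_sem S"
    then obtain u w t where z: "z = (u, w @ st_fout S t)" "t \<in> st_final S"
      "run (st_trans S) (st_init S) u w t" unfolding st_sem_def by blast
    have "t \<in> ?Q" using z(2) assms unfolding sequential_trans_def by auto
    have "run (st_trans S') (st_init S') u w (f t)"
      unfolding S'_def using run_map[OF z(3), of f] unfolding g_def by simp
    moreover have "st_fout S' (f t) = st_fout S t" unfolding S'_def using \<open>t \<in> ?Q\<close> f(2) by simp
    ultimately show "z \<in> st_sem S'" unfolding st_sem_def using z S'_def by force
  qed
  ultimately show ?thesis unfolding sequential_function_def by metis
qed


section \<open>The sequential transducer for a choice of transient transitions\<close>

definition STr :: "('q \<times> 'a \<times> 'b list \<times> 'q) set \<Rightarrow> ('q \<times> 'a \<times> 'b list \<times> 'q) list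
    \<Rightarrow> (('q \<times> nat) \<times> 'a \<times> 'b list \<times> ('q \<times> nat)) set" where
  "STr E s = {((p, k), a, v, (p', k)) | p a v p' k. (p, a, v, p') \<in> E \<and> \<not> transient E (p, a, v, p')
       \<and> k \<le> length s}
    \<union> {((p, k), a, v, (p', Suc k)) | p a v p' k. k < length s \<and> s ! k = (p, a, v, p')}"

lemma STr_run: "run (STr E s) pk u w qm \<Longrightarrow> set s \<subseteq> {e \<in> E. transient E e} \<Longrightarrow>
   snd pk \<le> snd qm \<and> trun E (fst pk) u w (take (snd qm - snd pk) (drop (snd pk) s)) (fst qm)"
proof (induction rule: run.induct)
  case (run_nil p) then show ?case by (auto intro: trun_nil)
next
  case (run_cons pk a v pk' u w qm)
  obtain p k p' k' where pk: "pk = (p, k)" "pk' = (p', k')" by (cases pk, cases pk') auto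
  from run_cons.hyps(1) show ?case unfolding STr_def
  proof (elim UnE CollectE exE conjE)
    fix p0 a0 v0 p0' k0
    assume h: "(pk, a, v, pk') = ((p0, k0), a0, v0, p0', k0)" "(p0, a0, v0, p0') \<in> E"
      "\<not> transient E (p0, a0, v0, p0')"
    then have "p0 = p" "k0 = k" "p0' = p'" "k' = k" "a0 = a" "v0 = v" using pk by auto
    then show ?thesis using run_cons.IH run_cons.prems pk h by (auto intro: trun_nt)
  next
    fix p0 a0 v0 p0' k0
    assume h: "(pk, a, v, pk') = ((p0, k0), a0, v0, p0', Suc k0)" "k0 < length s"
      "s ! k0 = (p0, a0, v0, p0')"
    then have e: "p0 = p" "k0 = k" "p0' = p'" "k' = Suc k" "a0 = a" "v0 = v" using pk by auto
    have le: "Suc k \<le> snd qm" using run_cons.IH run_cons.prems pk e by simp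
    have dr: "drop k s = (p, a, v, p') # drop (Suc k) s"
      using h e by (metis Cons_nth_drop_Suc)
    have "take (snd qm - k) (drop k s) = (p, a, v, p') # take (snd qm - Suc k) (drop (Suc k) s)"
    proof -
      have "snd qm - k = Suc (snd qm - Suc k)" using le by simp
      then show ?thesis using dr by simp
    qed
    moreover have "(p, a, v, p') \<in> set s" using h e by (metis nth_mem)
    then have "transient E (p, a, v, p')" "(p, a, v, p') \<in> E" using run_cons.prems by auto
    ultimately show ?thesis using run_cons.IH run_cons.prems pk e le by (auto intro: trun_tr)
  qed
qed

lemma trun_STr: "trun E p u w t q \<Longrightarrow> k \<le> length s \<Longrightarrow> drop k s = t @ r \<Longrightarrow>
   run (STr E s) (p, k) u w (q, k + length t)"
proof (induction arbitrary: k rule: trun.induct)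
  case (trun_nil p) then show ?case by (auto intro: run_nil)
next
  case (trun_nt p a v p' u w t q)
  have "((p, k), a, v, (p', k)) \<in> STr E s" unfolding STr_def using trun_nt by blast
  then show ?case using trun_nt by (auto intro: run_cons)
next
  case (trun_tr p a v p' u w t q)
  have kl: "k < length s" using trun_tr.prems(2) by (metis Cons_eq_append_conv drop_eq_Nil2 list.distinct(1) not_le_imp_less)
  have d: "drop k s = s ! k # drop (Suc k) s" using kl by (metis Cons_nth_drop_Suc)
  then have sk: "s ! k = (p, a, v, p')" "drop (Suc k) s = t @ r" using trun_tr.prems(2) by auto
  have "((p, k), a, v, (p', Suc k)) \<in> STr E s" unfolding STr_def using kl sk by blast
  moreover have "run (STr E s) (p', Suc k) u w (q, Suc k + length t)"
    using trun_tr.IH[of "Suc k"] kl sk by simp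
  ultimately show ?case by (auto intro: run_cons)
qed

definition STd :: "('q, 'a, 'b) mtrans \<Rightarrow> 'q \<Rightarrow> ('q \<times> 'a \<times> 'b list \<times> 'q) list \<Rightarrow> 'q
   \<Rightarrow> 'b list \<Rightarrow> ('q \<times> nat, 'a, 'b) strans" where
  "STd T i s t x = \<lparr>st_states = mt_states T \<times> {0..length s}, st_trans = STr (mt_trans T) s,
     st_init = (i, 0), st_final = {(t, length s)}, st_fout = (\<lambda>_. x)\<rparr>"

lemma seq_STd:
  assumes wf: "wf_mtrans T" and sep: "separable T" and i: "i \<in> mt_states T"
    and t: "t \<in> mt_states T" and s: "set s \<subseteq> {e \<in> mt_trans T. transient (mt_trans T) e}"
  shows "sequential_trans (STd T i s t x)"
proof -
  let ?E = "mt_trans T" and ?Q = "mt_states T" and ?n = "length s"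
  have finE: "finite ?E" and inQ: "\<forall>(p, a, v, q) \<in> ?E. p \<in> ?Q \<and> q \<in> ?Q" and finQ: "finite ?Q"
    using wf unfolding wf_mtrans_def by auto
  have sE: "\<And>k. k < ?n \<Longrightarrow> s ! k \<in> ?E \<and> transient ?E (s ! k)" using s nth_mem by blast
  have sub: "STr ?E s \<subseteq> (?Q \<times> {0..?n}) \<times> ((\<lambda>e. fst (snd e)) ` ?E) \<times>
     ((\<lambda>e. fst (snd (snd e))) ` ?E) \<times> (?Q \<times> {0..?n})"
  proof
    fix z assume "z \<in> STr ?E s"
    then show "z \<in> (?Q \<times> {0..?n}) \<times> ((\<lambda>e. fst (snd e)) ` ?E) \<times>
     ((\<lambda>e. fst (snd (snd e))) ` ?E) \<times> (?Q \<times> {0..?n})"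
      unfolding STr_def
    proof (elim UnE CollectE exE conjE)
      fix p a v p' k assume h: "z = ((p, k), a, v, p', k)" "(p, a, v, p') \<in> ?E" "k \<le> ?n"
      then show ?thesis using inQ by (force intro: image_eqI)
    next
      fix p a v p' k assume h: "z = ((p, k), a, v, p', Suc k)" "k < ?n" "s ! k = (p, a, v, p')"
      then have "(p, a, v, p') \<in> ?E" using sE by metis
      then show ?thesis using inQ h by (force intro: image_eqI)
    qed
  qed
  have finS: "finite (STr ?E s)"
    by (rule finite_subset[OF sub]) (use finQ finE in auto)
  have sepE: "\<And>e1 e2. e1 \<in> ?E \<Longrightarrow> e2 \<in> ?E \<Longrightarrow> e1 \<noteq> e2 \<Longrightarrow> fst e1 = fst e2 \<Longrightarrow>
      fst (snd e1) = fst (snd e2) \<Longrightarrow> transient ?E e1 \<and> transient ?E e2"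
    using sep unfolding separable_def by blast
  have det: "v = v' \<and> q = q'" if h1: "(pk, a, v, q) \<in> STr ?E s" and h2: "(pk, a, v', q') \<in> STr ?E s"
    for pk a v q v' q'
    using h1 unfolding STr_def
  proof (elim UnE CollectE exE conjE)
    fix p1 a1 v1 p1' k1
    assume g1: "(pk, a, v, q) = ((p1, k1), a1, v1, p1', k1)" "(p1, a1, v1, p1') \<in> ?E"
      "\<not> transient ?E (p1, a1, v1, p1')" "k1 \<le> ?n"
    show ?thesis using h2 unfolding STr_def
    proof (elim UnE CollectE exE conjE)
      fix p2 a2 v2 p2' k2
      assume g2: "(pk, a, v', q') = ((p2, k2), a2, v2, p2', k2)" "(p2, a2, v2, p2') \<in> ?E"
        "\<not> transient ?E (p2, a2, v2, p2')" "k2 \<le> ?n"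
      have "(p1, a1, v1, p1') = (p2, a2, v2, p2')"
        using sepE[OF g1(2) g2(2)] g1 g2 by auto
      then show ?thesis using g1 g2 by auto
    next
      fix p2 a2 v2 p2' k2
      assume g2: "(pk, a, v', q') = ((p2, k2), a2, v2, p2', Suc k2)" "k2 < ?n"
        "s ! k2 = (p2, a2, v2, p2')"
      have "(p2, a2, v2, p2') \<in> ?E" "transient ?E (p2, a2, v2, p2')" using sE[OF g2(2)] g2(3) by auto
      then show ?thesis using sepE[OF g1(2), of "(p2, a2, v2, p2')"] g1 g2 by auto
    qed
  next
    fix p1 a1 v1 p1' k1
    assume g1: "(pk, a, v, q) = ((p1, k1), a1, v1, p1', Suc k1)" "k1 < ?n"
        "s ! k1 = (p1, a1, v1, p1')"
    have e1: "(p1, a1, v1, p1') \<in> ?E" "transient ?E (p1, a1, v1, p1')" using sE[OF g1(2)] g1(3) by auto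
    show ?thesis using h2 unfolding STr_def
    proof (elim UnE CollectE exE conjE)
      fix p2 a2 v2 p2' k2
      assume g2: "(pk, a, v', q') = ((p2, k2), a2, v2, p2', k2)" "(p2, a2, v2, p2') \<in> ?E"
        "\<not> transient ?E (p2, a2, v2, p2')" "k2 \<le> ?n"
      then show ?thesis using sepE[OF g2(2) e1(1)] e1 g1 g2 by auto
    next
      fix p2 a2 v2 p2' k2
      assume g2: "(pk, a, v', q') = ((p2, k2), a2, v2, p2', Suc k2)" "k2 < ?n"
        "s ! k2 = (p2, a2, v2, p2')"
      then show ?thesis using g1 by auto
    qed
  qed
  have trS: "\<forall>(p, a, v, q) \<in> STr ?E s. p \<in> ?Q \<times> {0..?n} \<and> q \<in> ?Q \<times> {0..?n}"
    using sub by fastforce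
  show ?thesis unfolding sequential_trans_def STd_def
    apply (simp only: strans.simps)
    apply (intro conjI allI impI)
    using finQ finS trS i t det by auto
qed

theorem lemma5:
  fixes T :: "('q, 'a, 'b) mtrans"
  assumes "wf_mtrans T"
    and "separable T"
  shows "multi_sequential (mt_sem T)"
proof -
  let ?E = "mt_trans T"
  obtain i where i: "mt_init T = {i}" using assms(2) unfolding separable_def by blast
  have iQ: "i \<in> mt_states T" and finE: "finite ?E" and finF: "finite (mt_final T)"
    and FQ: "mt_final T \<subseteq> mt_states T" and finO: "\<forall>t \<in> mt_final T. finite (mt_fout T t)"
    using assms(1) i unfolding wf_mtrans_def by (auto intro: finite_subset)
  define D where "D = {s. set s \<subseteq> {e \<in> ?E. transient ?E e} \<and> distinct s}"
  define Idx where "Idx = D \<times> Sigma (mt_final T) (mt_fout T)"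
  define Rs where "Rs = (\<lambda>(s, t, x). st_sem (STd T i s t x)) ` Idx"
  have finD: "finite D" unfolding D_def by (rule finite_subset_distinct) (use finE in auto)
  have "finite Idx" unfolding Idx_def using finD finF finO by (auto intro: finite_SigmaI)
  then have "finite Rs" unfolding Rs_def by simp
  moreover have "\<forall>R' \<in> Rs. sequential_function R'"
  proof
    fix R' assume "R' \<in> Rs"
    then obtain s t x where h: "(s, t, x) \<in> Idx" "R' = st_sem (STd T i s t x)"
      unfolding Rs_def by auto
    have "sequential_trans (STd T i s t x)"
      by (rule seq_STd[OF assms iQ]) (use h FQ in \<open>auto simp: Idx_def D_def\<close>)
    then show "sequential_function R'" using h(2) seq_nat by blast
  qed
  moreover have "mt_sem T = \<Union> Rs"
  proof (rule set_eqI, rule iffI)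
    fix z assume "z \<in> mt_sem T"
    then obtain u w x t where z: "z = (u, w @ x)" "t \<in> mt_final T" "run ?E i u w t" "x \<in> mt_fout T t"
      unfolding mt_sem_def i by blast
    obtain s where tr: "trun ?E i u w s t" using run_trun[OF z(3)] by blast
    have "s \<in> D" using trun_distinct[OF tr] unfolding D_def by simp
    then have idx: "(s, t, x) \<in> Idx" unfolding Idx_def using z by auto
    have "run (STr ?E s) (i, 0) u w (t, 0 + length s)" by (rule trun_STr[OF tr]) auto
    then have "z \<in> st_sem (STd T i s t x)" unfolding st_sem_def STd_def using z(1) by force
    then show "z \<in> \<Union> Rs" unfolding Rs_def using idx by blast
  next
    fix z assume "z \<in> \<Union> Rs"
    then obtain s t x where h: "(s, t, x) \<in> Idx" "z \<in> st_sem (STd T i s t x)"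
      unfolding Rs_def by auto
    then obtain u w q where q: "z = (u, w @ x)" "q = (t, length s)"
      "run (STr ?E s) (i, 0) u w q" unfolding st_sem_def STd_def by auto
    have sD: "set s \<subseteq> {e \<in> ?E. transient ?E e}" using h(1) unfolding Idx_def D_def by auto
    from STr_run[OF q(3) sD] q(2) have "trun ?E i u w s t" by simp
    then have "run ?E i u w t" by (rule trun_run)
    then show "z \<in> mt_sem T" unfolding mt_sem_def using i q(1) h(1) unfolding Idx_def by blast
  qed
  ultimately show ?thesis unfolding multi_sequential_def by blast
qed

end
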